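(* Let $(C,\ll)$ be an abstract basis that is also interpolative from the $+$ direction, i.e. for every $x\in C$ and finite $F\subseteq C$ with $x\ll f$ for all $f\in F$, there is $y\in C$ with $x\ll y$ and $y\ll f$ for all $f\in F$. Let $\mathrm{int}(C)=\{(a,b)\in C^2: a\ll b\}$ with the relation $(a,b)\ll(c,d)$ iff $a\ll c$ and $d\ll b$. Then $(\mathrm{int}(C),\ll)$ is an abstract basis.
   Context: An abstract basis is a set $B$ with a transitive relation $<$ that is interpolative: for every $x\in B$ and every finite $M\subseteq B$ with $m<x$ for all $m\in M$, there exists $y\in B$ with $m<y$ for all $m\in M$ and $y<x$. *)

theory Defs
  imports Main
begin

definition abstract_basis :: "'a set \<Rightarrow> ('a \<Rightarrow> 'a \<Rightarrow> bool) \<Rightarrow> bool" where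
  "abstract_basis B r \<longleftrightarrow>
     (\<forall>x\<in>B. \<forall>y\<in>B. \<forall>z\<in>B. r x y \<longrightarrow> r y z \<longrightarrow> r x z) \<and>
     (\<forall>x\<in>B. \<forall>M. finite M \<longrightarrow> M \<subseteq> B \<longrightarrow> (\<forall>m\<in>M. r m x) \<longrightarrow>
        (\<exists>y\<in>B. (\<forall>m\<in>M. r m y) \<and> r y x))"

definition interpolative_plus :: "'a set \<Rightarrow> ('a \<Rightarrow> 'a \<Rightarrow> bool) \<Rightarrow> bool" where
  "interpolative_plus B r \<longleftrightarrow>
     (\<forall>x\<in>B. \<forall>F. finite F \<longrightarrow> F \<subseteq> B \<longrightarrow> (\<forall>f\<in>F. r x f) \<longrightarrow>
        (\<exists>y\<in>B. r x y \<and> (\<forall>f\<in>F. r y f)))"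

definition int_set :: "'a set \<Rightarrow> ('a \<Rightarrow> 'a \<Rightarrow> bool) \<Rightarrow> ('a \<times> 'a) set" where
  "int_set C r = {(a, b). a \<in> C \<and> b \<in> C \<and> r a b}"

definition int_rel :: "('a \<Rightarrow> 'a \<Rightarrow> bool) \<Rightarrow> ('a \<times> 'a) \<Rightarrow> ('a \<times> 'a) \<Rightarrow> bool" where
  "int_rel r p q \<longleftrightarrow> r (fst p) (fst q) \<and> r (snd q) (snd p)"

end

theory Submission
  imports Defs
begin

theorem mainTheorem5:
  fixes C :: "'a set" and r :: "'a \<Rightarrow> 'a \<Rightarrow> bool"
  assumes "abstract_basis C r"
    and "interpolative_plus C r"
  shows "abstract_basis (int_set C r) (int_rel r)"
proof -
  have tr: "\<And>x y z. x \<in> C \<Longrightarrow> y \<in> C \<Longrightarrow> z \<in> C \<Longrightarrow> r x y \<Longrightarrow> r y z \<Longrightarrow> r x z"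
    using assms(1) unfolding abstract_basis_def by blast
  have im: "\<And>x M. x \<in> C \<Longrightarrow> finite M \<Longrightarrow> M \<subseteq> C \<Longrightarrow> (\<forall>m\<in>M. r m x) \<Longrightarrow>
        (\<exists>y\<in>C. (\<forall>m\<in>M. r m y) \<and> r y x)"
    using assms(1) unfolding abstract_basis_def by blast
  have ip: "\<And>x F. x \<in> C \<Longrightarrow> finite F \<Longrightarrow> F \<subseteq> C \<Longrightarrow> (\<forall>f\<in>F. r x f) \<Longrightarrow>
        (\<exists>y\<in>C. r x y \<and> (\<forall>f\<in>F. r y f))"
    using assms(2) unfolding interpolative_plus_def by blast
  show ?thesis
    unfolding abstract_basis_def
  proof (intro conjI ballI allI impI)
    fix x y z assume "x \<in> int_set C r" "y \<in> int_set C r" "z \<in> int_set C r"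
      "int_rel r x y" "int_rel r y z"
    then show "int_rel r x z" unfolding int_set_def int_rel_def
    proof (cases x, cases y, cases z)
      fix a b c d e f
      assume "x \<in> {(a, b). a \<in> C \<and> b \<in> C \<and> r a b}" "y \<in> {(a, b). a \<in> C \<and> b \<in> C \<and> r a b}"
        "z \<in> {(a, b). a \<in> C \<and> b \<in> C \<and> r a b}"
        "r (fst x) (fst y) \<and> r (snd y) (snd x)" "r (fst y) (fst z) \<and> r (snd z) (snd y)"
        and e: "x = (a, b)" "y = (c, d)" "z = (e, f)"
      then have h: "a \<in> C" "b \<in> C" "c \<in> C" "d \<in> C" "e \<in> C" "f \<in> C"
        "r a c" "r d b" "r c e" "r f d" by auto
      have "r a e" using tr[of a c e] h by blast
      moreover have "r f b" using tr[of f d b] h by blast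
      ultimately show "r (fst x) (fst z) \<and> r (snd z) (snd x)" using e by simp
    qed
  next
    fix x and M :: "('a \<times> 'a) set"
    assume x: "x \<in> int_set C r" and fM: "finite M" and MC: "M \<subseteq> int_set C r"
      and lt: "\<forall>m\<in>M. int_rel r m x"
    obtain c d where xcd: "x = (c, d)" "c \<in> C" "d \<in> C" "r c d"
      using x unfolding int_set_def by auto
    have fC: "fst ` M \<subseteq> C" "snd ` M \<subseteq> C" using MC unfolding int_set_def by auto
    obtain y1 where y1: "y1 \<in> C" "\<forall>m\<in>fst ` M. r m y1" "r y1 c"
      using im[of c "fst ` M"] xcd fM fC lt unfolding int_rel_def by auto
    obtain y2 where y2: "y2 \<in> C" "r d y2" "\<forall>m\<in>snd ` M. r y2 m"
      using ip[of d "snd ` M"] xcd fM fC lt unfolding int_rel_def by auto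
    have "r c y2" using tr[of c d y2] xcd y2 by auto
    then have "r y1 y2" using tr[of y1 c y2] xcd y1 y2 by auto
    then show "\<exists>y\<in>int_set C r. (\<forall>m\<in>M. int_rel r m y) \<and> int_rel r y x"
      using y1 y2 xcd unfolding int_set_def int_rel_def
      by (intro bexI[of _ "(y1, y2)"]) auto
  qed
qed

end
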